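(* There is a topological space of size $\mathfrak{c}$ which is $NWD$-separable but not $d$-separable.
   Context: A space $X$ is $NWD$-separable if for every sequence $\{D_n:n<\omega\}$ of dense subsets of $X$ there are nowhere dense sets $E_n\subseteq D_n$ such that $\bigcup_{n<\omega}E_n$ is dense. A space is $d$-separable if it has a dense subset which is a countable union of discrete subspaces. $\mathfrak{c}=2^{\aleph_0}$. *)

theory Defs
  imports "HOL-Analysis.Analysis"
begin

definition dense_in :: "'a topology \<Rightarrow> 'a set \<Rightarrow> bool" where
  "dense_in X D \<longleftrightarrow> D \<subseteq> topspace X \<and> X closure_of D = topspace X"

definition nowhere_dense_in :: "'a topology \<Rightarrow> 'a set \<Rightarrow> bool" where
  "nowhere_dense_in X E \<longleftrightarrow> E \<subseteq> topspace X \<and> X interior_of (X closure_of E) = {}"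

definition discrete_subspace :: "'a topology \<Rightarrow> 'a set \<Rightarrow> bool" where
  "discrete_subspace X A \<longleftrightarrow> A \<subseteq> topspace X \<and>
     (\<forall>a\<in>A. \<exists>U. openin X U \<and> U \<inter> A = {a})"

definition d_separable :: "'a topology \<Rightarrow> bool" where
  "d_separable X \<longleftrightarrow> (\<exists>D :: nat \<Rightarrow> 'a set.
     (\<forall>n. discrete_subspace X (D n)) \<and> dense_in X (\<Union>n. D n))"

definition NWD_separable :: "'a topology \<Rightarrow> bool" where
  "NWD_separable X \<longleftrightarrow> (\<forall>D :: nat \<Rightarrow> 'a set. (\<forall>n. dense_in X (D n)) \<longrightarrow>
     (\<exists>E :: nat \<Rightarrow> 'a set. (\<forall>n. E n \<subseteq> D n \<and> nowhere_dense_in X (E n))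
        \<and> dense_in X (\<Union>n. E n)))"

end

theory Submission
  imports Defs
begin

definition opn :: "'a set \<Rightarrow> ('a \<Rightarrow> real) \<Rightarrow> ('a \<Rightarrow> nat) \<Rightarrow> 'a set \<Rightarrow> bool" where
  "opn P pr lv U \<longleftrightarrow> U \<subseteq> P \<and> (\<forall>x\<in>U. \<exists>C. countable C \<and> pr x \<notin> C \<and>
       (\<forall>y\<in>P. pr y \<notin> C \<longrightarrow> lv x \<le> lv y \<longrightarrow> y \<in> U))"

definition Xt :: "'a set \<Rightarrow> ('a \<Rightarrow> real) \<Rightarrow> ('a \<Rightarrow> nat) \<Rightarrow> 'a topology" where
  "Xt P pr lv = topology (opn P pr lv)"

lemma opn_Int: "opn P pr lv S \<Longrightarrow> opn P pr lv T \<Longrightarrow> opn P pr lv (S \<inter> T)"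
  unfolding opn_def
proof (intro conjI ballI)
  assume a: "S \<subseteq> P \<and> (\<forall>x\<in>S. \<exists>C. countable C \<and> pr x \<notin> C \<and> (\<forall>y\<in>P. pr y \<notin> C \<longrightarrow> lv x \<le> lv y \<longrightarrow> y \<in> S))"
     and b: "T \<subseteq> P \<and> (\<forall>x\<in>T. \<exists>C. countable C \<and> pr x \<notin> C \<and> (\<forall>y\<in>P. pr y \<notin> C \<longrightarrow> lv x \<le> lv y \<longrightarrow> y \<in> T))"
  show "S \<inter> T \<subseteq> P" using a by blast
  fix x assume x: "x \<in> S \<inter> T"
  have "x \<in> S" "x \<in> T" using x by simp_all
  from bspec[OF conjunct2[OF a] \<open>x \<in> S\<close>] obtain C1 where 1: "countable C1" "pr x \<notin> C1" "\<forall>y\<in>P. pr y \<notin> C1 \<longrightarrow> lv x \<le> lv y \<longrightarrow> y \<in> S"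
    by (elim exE conjE)
  from bspec[OF conjunct2[OF b] \<open>x \<in> T\<close>] obtain C2 where 2: "countable C2" "pr x \<notin> C2" "\<forall>y\<in>P. pr y \<notin> C2 \<longrightarrow> lv x \<le> lv y \<longrightarrow> y \<in> T"
    by (elim exE conjE)
  show "\<exists>C. countable C \<and> pr x \<notin> C \<and> (\<forall>y\<in>P. pr y \<notin> C \<longrightarrow> lv x \<le> lv y \<longrightarrow> y \<in> S \<inter> T)"
    apply (rule exI[of _ "C1 \<union> C2"])
    using 1 2 by simp
qed

lemma opn_Union: "\<forall>S\<in>K. opn P pr lv S \<Longrightarrow> opn P pr lv (\<Union>K)"
  unfolding opn_def
proof (intro conjI ballI)
  assume a: "\<forall>S\<in>K. S \<subseteq> P \<and> (\<forall>x\<in>S. \<exists>C. countable C \<and> pr x \<notin> C \<and> (\<forall>y\<in>P. pr y \<notin> C \<longrightarrow> lv x \<le> lv y \<longrightarrow> y \<in> S))"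
  show "\<Union>K \<subseteq> P" using a by blast
  fix x assume "x \<in> \<Union>K"
  then obtain S where S: "S \<in> K" "x \<in> S" by (rule UnionE)
  from bspec[OF conjunct2[OF bspec[OF a S(1)]] S(2)] obtain C where C: "countable C" "pr x \<notin> C" "\<forall>y\<in>P. pr y \<notin> C \<longrightarrow> lv x \<le> lv y \<longrightarrow> y \<in> S"
    by (elim exE conjE)
  show "\<exists>C. countable C \<and> pr x \<notin> C \<and> (\<forall>y\<in>P. pr y \<notin> C \<longrightarrow> lv x \<le> lv y \<longrightarrow> y \<in> \<Union>K)"
    apply (rule exI[of _ C])
    using C S by blast
qed

lemma Xt_istop: "istopology (opn P pr lv)"
  unfolding istopology_def using opn_Int opn_Union by blast

lemma Xt_open0: "openin (Xt P pr lv) U \<longleftrightarrow> opn P pr lv U"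
  unfolding Xt_def by (simp only: topology_inverse'[OF Xt_istop])

lemma Xt_open: "openin (Xt P pr lv) U \<longleftrightarrow> U \<subseteq> P \<and> (\<forall>x\<in>U. \<exists>C. countable C \<and> pr x \<notin> C \<and>
       {y\<in>P. pr y \<notin> C \<and> lv x \<le> lv y} \<subseteq> U)"
  unfolding Xt_open0 opn_def by (simp add: subset_iff imp_conjL Ball_def)

lemma Xt_top: "topspace (Xt P pr lv) = P"
proof -
  have "openin (Xt P pr lv) P" unfolding Xt_open by (auto intro: exI[of _ "{}"])
  then have "P \<subseteq> topspace (Xt P pr lv)" by (rule openin_subset)
  moreover have "topspace (Xt P pr lv) \<subseteq> P"
    using openin_topspace[of "Xt P pr lv"] unfolding Xt_open by blast
  ultimately show ?thesis by blast
qed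

lemma Xt_nbhd_open: "openin (Xt P pr lv) {y\<in>P. pr y \<notin> C \<and> k \<le> lv y}" if "countable C"
  unfolding Xt_open using that by (auto intro!: exI[of _ C])

lemma nonempty_witness_aux: "A \<noteq> {} \<Longrightarrow> (\<And>a. a \<in> A \<Longrightarrow> thesis) \<Longrightarrow> thesis"
  by blast

lemma closure_hit: "x \<in> X closure_of S \<Longrightarrow> x \<in> T \<Longrightarrow> openin X T \<Longrightarrow> \<exists>y. y \<in> S \<and> y \<in> T"
  by (auto simp: in_closure_of)

locale good =
  fixes P :: "'a set" and pr :: "'a \<Rightarrow> real" and lv :: "'a \<Rightarrow> nat"
  assumes rich: "\<And>k C. countable C \<Longrightarrow> \<exists>y\<in>P. lv y = k \<and> pr y \<notin> C"
begin

abbreviation "X \<equiv> Xt P pr lv"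

lemma F_closed: "closedin X {x\<in>P. lv x \<le> n}"
proof -
  have "topspace X - {x\<in>P. lv x \<le> n} = {y\<in>P. pr y \<notin> {} \<and> Suc n \<le> lv y}"
    by (auto simp: Xt_top)
  then show ?thesis unfolding closedin_def using Xt_nbhd_open[where C="{}" and k="Suc n" and P=P and pr=pr and lv=lv]
    by (auto simp: Xt_top)
qed

lemma F_int: "X interior_of {x\<in>P. lv x \<le> n} = {}"
proof (rule ccontr)
  assume "X interior_of {x\<in>P. lv x \<le> n} \<noteq> {}"
  then obtain x where "x \<in> X interior_of {x\<in>P. lv x \<le> n}" by blast
  then obtain U where U: "openin X U" "x \<in> U" "U \<subseteq> {x\<in>P. lv x \<le> n}"
    by (auto simp: interior_of_def)
  then obtain C where C: "countable C" "{y\<in>P. pr y \<notin> C \<and> lv x \<le> lv y} \<subseteq> U"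
    unfolding Xt_open by blast
  obtain y where "y \<in> P" "lv y = n + 1 + lv x" "pr y \<notin> C" using rich[OF C(1)] by blast
  then have "y \<in> U" using C(2) by auto
  then show False using U(3) \<open>lv y = n + 1 + lv x\<close> by auto
qed

lemma dense_level: "\<exists>l\<ge>n. uncountable (pr ` (D \<inter> {x. lv x = l}))" if D: "dense_in X D"
proof (rule ccontr)
  assume "\<not> ?thesis"
  then have cnt: "countable (pr ` (D \<inter> {x. lv x = l}))" if "l \<ge> n" for l using that by blast
  define C where "C = (\<Union>l\<in>{n..}. pr ` (D \<inter> {x. lv x = l}))"
  have "countable C" unfolding C_def using cnt by auto
  obtain y where y: "y \<in> P" "lv y = n" "pr y \<notin> C" using rich[OF \<open>countable C\<close>] by blast
  have cl: "y \<in> X closure_of D" using D y by (auto simp: dense_in_def Xt_top)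
  have op: "openin X {z\<in>P. pr z \<notin> C \<and> n \<le> lv z}" using Xt_nbhd_open \<open>countable C\<close> by blast
  have yN: "y \<in> {z\<in>P. pr z \<notin> C \<and> n \<le> lv z}" using y by auto
  obtain z where z: "z \<in> D" "z \<in> {z\<in>P. pr z \<notin> C \<and> n \<le> lv z}"
    using closure_hit[OF cl yN op] by blast
  then have "pr z \<in> C" unfolding C_def by auto
  then show False using z by auto
qed

lemma NWD: "NWD_separable X"
  unfolding NWD_separable_def
proof (intro allI impI)
  fix D :: "nat \<Rightarrow> 'a set" assume D: "\<forall>n. dense_in X (D n)"
  have "\<forall>n. \<exists>l. l \<ge> n \<and> uncountable (pr ` (D n \<inter> {x. lv x = l}))"
  proof
    fix n show "\<exists>l. l \<ge> n \<and> uncountable (pr ` (D n \<inter> {x. lv x = l}))"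
      by (rule dense_level[OF D[rule_format]])
  qed
  from choice[OF this] obtain L where LL: "\<forall>n. L n \<ge> n \<and> uncountable (pr ` (D n \<inter> {x. lv x = L n}))" ..
  have L: "L n \<ge> n" "uncountable (pr ` (D n \<inter> {x. lv x = L n}))" for n using LL by simp_all
  define E where "E n = D n \<inter> {x. lv x = L n}" for n
  have "E n \<subseteq> D n \<and> nowhere_dense_in X (E n)" for n
  proof -
    have "X closure_of E n \<subseteq> {x\<in>P. lv x \<le> L n}"
      by (rule closure_of_minimal[OF _ F_closed]) (use D in \<open>auto simp: E_def dense_in_def Xt_top\<close>)
    then have "X interior_of (X closure_of E n) = {}"
      using interior_of_mono F_int by blast
    then show ?thesis using D by (auto simp: E_def nowhere_dense_in_def dense_in_def)
  qed
  moreover have "dense_in X (\<Union>n. E n)"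
  proof -
    have sub: "(\<Union>n. E n) \<subseteq> topspace X" using D by (auto simp: E_def dense_in_def)
    have "P \<subseteq> X closure_of (\<Union>n. E n)"
    proof
      fix y assume y: "y \<in> P"
      show "y \<in> X closure_of (\<Union>n. E n)"
        unfolding in_closure_of
      proof (intro conjI allI impI)
        show "y \<in> topspace X" using y by (simp add: Xt_top)
        fix T assume T: "y \<in> T \<and> openin X T"
        then obtain C where C: "countable C" "{z\<in>P. pr z \<notin> C \<and> lv y \<le> lv z} \<subseteq> T"
          unfolding Xt_open by blast
        have "\<not> pr ` E (lv y) \<subseteq> C" using L(2) C(1) countable_subset unfolding E_def by blast
        then obtain z where z: "z \<in> E (lv y)" "pr z \<notin> C" by blast
        have "z \<in> P" using z D by (auto simp: E_def dense_in_def Xt_top)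
        moreover have "lv y \<le> lv z" using z L(1)[of "lv y"] by (auto simp: E_def)
        ultimately have "z \<in> T" using C(2) z by blast
        then show "\<exists>z. z \<in> (\<Union>n. E n) \<and> z \<in> T" using z by blast
      qed
    qed
    then show ?thesis using sub closure_of_subset_topspace[of X "\<Union>n. E n"]
      by (auto simp: dense_in_def Xt_top)
  qed
  ultimately show "\<exists>E. (\<forall>n. E n \<subseteq> D n \<and> nowhere_dense_in X (E n)) \<and> dense_in X (\<Union> (range E))"
    by blast
qed

lemma discrete_count: "countable (pr ` A)" if A: "discrete_subspace X A"
proof (cases "A = {}")
  case True then show ?thesis by (simp only: image_empty countable_empty)
next
  case False
  define m where "m = (LEAST k. \<exists>a\<in>A. lv a = k)"
  obtain a0 where a0: "a0 \<in> A" using False by (rule nonempty_witness_aux)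
  have ex: "\<exists>k. \<exists>a\<in>A. lv a = k" using a0 by (intro exI bexI[of _ a0]) (rule refl)
  have "\<exists>a\<in>A. lv a = m" unfolding m_def by (rule LeastI_ex[OF ex])
  then obtain a where a: "a \<in> A" "lv a = m" by (elim bexE)
  have min: "lv a \<le> lv b" if "b \<in> A" for b
  proof -
    have "\<exists>a\<in>A. lv a = lv b" using that by (intro bexI[of _ b]) (rule refl)
    then have "(LEAST k. \<exists>a\<in>A. lv a = k) \<le> lv b" by (rule Least_le)
    then show ?thesis using a(2) unfolding m_def by simp
  qed
  have Ad: "\<forall>a\<in>A. \<exists>U. openin X U \<and> U \<inter> A = {a}" using A unfolding discrete_subspace_def by (rule conjunct2)
  obtain U where U: "openin X U" "U \<inter> A = {a}" using bspec[OF Ad a(1)] by (elim exE conjE)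
  have "a \<in> U \<inter> A" unfolding U(2) by (rule singletonI)
  then have "a \<in> U" by (rule IntD1)
  from U(1) have "\<forall>x\<in>U. \<exists>C. countable C \<and> pr x \<notin> C \<and> {y\<in>P. pr y \<notin> C \<and> lv x \<le> lv y} \<subseteq> U"
    unfolding Xt_open by (rule conjunct2)
  from bspec[OF this \<open>a \<in> U\<close>] obtain C where C: "countable C" "{y\<in>P. pr y \<notin> C \<and> lv a \<le> lv y} \<subseteq> U"
    by (elim exE conjE)
  have AP: "A \<subseteq> P" using A unfolding discrete_subspace_def Xt_top by (rule conjunct1)
  have "pr ` A \<subseteq> insert (pr a) C"
  proof (rule image_subsetI)
    fix b assume b: "b \<in> A"
    have "b \<in> P" using AP b by (rule subsetD)
    show "pr b \<in> insert (pr a) C"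
    proof (rule ccontr)
      assume nb: "pr b \<notin> insert (pr a) C"
      then have "pr b \<notin> C" by simp
      then have "b \<in> {y\<in>P. pr y \<notin> C \<and> lv a \<le> lv y}" using \<open>b \<in> P\<close> min[OF b] by simp
      then have "b \<in> U" by (rule subsetD[OF C(2)])
      then have "b \<in> U \<inter> A" using b by (rule IntI)
      then have "b = a" unfolding U(2) by simp
      then show False using nb by simp
    qed
  qed
  moreover have "countable (insert (pr a) C)" using C(1) by (rule countable_insert)
  ultimately show ?thesis by (rule countable_subset)
qed

lemma not_d: "\<not> d_separable X"
proof
  assume "d_separable X"
  then obtain D :: "nat \<Rightarrow> 'a set" where D: "\<forall>n. discrete_subspace X (D n)" "dense_in X (\<Union>n. D n)"
    unfolding d_separable_def by (elim exE conjE)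
  define C where "C = (\<Union>n. pr ` D n)"
  have "countable (pr ` D n)" for n using D(1) by (intro discrete_count) simp
  then have "countable C" unfolding C_def by (intro countable_UN) simp_all
  obtain y where y: "y \<in> P" "pr y \<notin> C" using rich[OF \<open>countable C\<close>] by blast
  have "X closure_of (\<Union>n. D n) = P" using D(2) unfolding dense_in_def Xt_top by (rule conjunct2)
  then have cl: "y \<in> X closure_of (\<Union>n. D n)" using y(1) by simp
  have op: "openin X {z\<in>P. pr z \<notin> C \<and> lv y \<le> lv z}" by (rule Xt_nbhd_open) (rule \<open>countable C\<close>)
  have yN: "y \<in> {z\<in>P. pr z \<notin> C \<and> lv y \<le> lv z}" using y by simp
  obtain z where "z \<in> (\<Union>n. D n)" "z \<in> {z\<in>P. pr z \<notin> C \<and> lv y \<le> lv z}"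
    using closure_hit[OF cl yN op] by (elim exE conjE)
  then show False unfolding C_def by blast
qed

end

lemma rich_inst: "countable C \<Longrightarrow> \<exists>y\<in>range (\<lambda>r::real. {r}). nat \<lfloor>the_elem y\<rfloor> = k \<and> frac (the_elem y) \<notin> C"
proof -
  assume "countable C"
  have "uncountable {0<..<1::real}" by (simp add: uncountable_open_interval)
  then obtain t where t: "t \<in> {0<..<1::real}" "t \<notin> C"
  proof -
    have "\<not> {0<..<1::real} \<subseteq> C" using countable_subset \<open>countable C\<close> \<open>uncountable {0<..<1::real}\<close> by blast
    then show ?thesis using that by blast
  qed
  have fl: "\<lfloor>real k + t\<rfloor> = int k" using t by (simp add: floor_eq_iff)
  have "frac (real k + t) = t" using fl by (simp add: frac_def)
  then show ?thesis using fl t by (intro bexI[of _ "{real k + t}"]) auto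
qed

interpretation R: good "range (\<lambda>r::real. {r})" "\<lambda>x. frac (the_elem x)" "\<lambda>x. nat \<lfloor>the_elem x\<rfloor>"
  by unfold_locales (rule rich_inst)

theorem mainTheorem10:
  shows "\<exists>X :: real set topology. topspace X \<approx> (UNIV :: real set)
           \<and> NWD_separable X \<and> \<not> d_separable X"
proof (intro exI conjI)
  have "bij_betw (\<lambda>r::real. {r}) UNIV (range (\<lambda>r::real. {r}))"
    by (auto simp: bij_betw_def inj_on_def)
  then have "(UNIV::real set) \<approx> range (\<lambda>r::real. {r})" unfolding eqpoll_def by blast
  then show "topspace R.X \<approx> (UNIV::real set)" by (simp add: Xt_top eqpoll_sym)
  show "NWD_separable R.X" by (rule R.NWD)
  show "\<not> d_separable R.X" by (rule R.not_d)
qed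

end
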